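(* Fix $\kappa>0$ and $x_0\in\mathbb R^2$ with $\kappa|x_0|$ irrational. Let $m,\Phi,I,l,\alpha_0$ satisfy hypotheses (1)–(3) of Lemma (int1 est), and set $u(\alpha):=\Phi_l(\alpha)-\Phi_l(\alpha_0)$ (which does not change sign on $I$). Then the function $$f(\alpha):=\frac{d}{d\alpha}\Bigl[\frac{|u(\alpha)|^{1/2}}{\sin(\pi\kappa\Phi_l'(\alpha))}\Bigr],$$ defined on $I$ away from the zero set of $\Phi_l'$, changes sign at most $N$ times on $I$, where $N$ is independent of $m\neq0$ (and of $l$ and $I$).
   Context: $\vec\alpha=(\cos\alpha,\sin\alpha)$. $\Phi(\alpha):=-m\,\vec\alpha\cdot x_0$ with $m\in\mathbb Z\setminus\{0\}$; $\Phi_l(\alpha):=\Phi(\alpha)-(l/\kappa)\alpha$. Hypotheses of Lemma (int1 est): $I=[a,b]\subset[-\pi,\pi]$, $l\in\mathbb Z$; (1) $\Phi''(\alpha)\neq0$ on $(a,b)$; (2) $\alpha_0\in I$ with $\kappa\Phi'(\alpha_0)=l$ and $\Phi''(\alpha_0)\ne0$; (3) $|\kappa\Phi'(\alpha)-l|\le1/2$ on $I$. *)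

theory Defs
  imports "HOL-Analysis.Analysis"
begin

definition avec :: "real \<Rightarrow> real^2" where
  "avec \<alpha> = vector [cos \<alpha>, sin \<alpha>]"

definition Phi :: "int \<Rightarrow> real^2 \<Rightarrow> real \<Rightarrow> real" where
  "Phi m x0 \<alpha> = - of_int m * (avec \<alpha> \<bullet> x0)"

definition Phi_l :: "real \<Rightarrow> int \<Rightarrow> real^2 \<Rightarrow> int \<Rightarrow> real \<Rightarrow> real" where
  "Phi_l \<kappa> m x0 l \<alpha> = Phi m x0 \<alpha> - (of_int l / \<kappa>) * \<alpha>"

definition sign_changes_at_most :: "nat \<Rightarrow> (real \<Rightarrow> real) \<Rightarrow> real set \<Rightarrow> bool" where
  "sign_changes_at_most N f D \<longleftrightarrow>
     \<not> (\<exists>t :: nat \<Rightarrow> real. (\<forall>i\<le>Suc N. t i \<in> D) \<and>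
            (\<forall>i\<le>N. t i < t (Suc i) \<and> f (t i) * f (t (Suc i)) < 0))"

end

theory Submission
  imports Defs
begin


definition betw :: "real set \<Rightarrow> bool" where
  "betw P \<longleftrightarrow> (\<forall>x y z. x \<in> P \<longrightarrow> z \<in> P \<longrightarrow> x < y \<longrightarrow> y < z \<longrightarrow> y \<in> P)"
definition noalt :: "(real \<Rightarrow> real) \<Rightarrow> real set \<Rightarrow> bool" where
  "noalt f P \<longleftrightarrow> (\<forall>x y z. x \<in> P \<longrightarrow> y \<in> P \<longrightarrow> z \<in> P \<longrightarrow> x < y \<longrightarrow> y < z \<longrightarrow>
      \<not> (f x * f y < 0 \<and> f y * f z < 0))"

lemma seq_mono:
  assumes "\<forall>i\<le>N. t i < t (Suc i)" "i < j" "j \<le> Suc N"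
  shows "t i < (t j :: real)"
  using assms(2,3)
proof (induction j)
  case 0 then show ?case by simp
next
  case (Suc j)
  show ?case
  proof (cases "i = j")
    case True then show ?thesis using assms(1) Suc.prems by auto
  next
    case False
    then have "t i < t j" using Suc by auto
    also have "t j < t (Suc j)" using assms(1) Suc.prems by auto
    finally show ?thesis .
  qed
qed

lemma fiber_card:
  assumes alt: "\<forall>i\<le>N. t i < t (Suc i) \<and> f (t i) * f (t (Suc i)) < (0::real)"
    and bP: "betw P" and nP: "noalt f P"
  shows "card {i. i \<le> Suc N \<and> t i \<in> P} \<le> 2"
proof (cases "{i. i \<le> Suc N \<and> t i \<in> P} = {}")
  case True then show ?thesis by (simp only: True card.empty)
next
  case False
  define F where "F = {i. i \<le> Suc N \<and> t i \<in> P}"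
  have fin: "finite F" unfolding F_def by auto
  define i0 where "i0 = Min F"
  have i0F: "i0 \<in> F" using False fin unfolding i0_def F_def by (intro Min_in) auto
  have i0le: "\<And>j. j \<in> F \<Longrightarrow> i0 \<le> j" using fin unfolding i0_def by auto
  have mono: "\<And>i j. i < j \<Longrightarrow> j \<le> Suc N \<Longrightarrow> t i < t j"
    using seq_mono[of N t] alt by auto
  have sub: "F \<subseteq> {i0, Suc i0}"
  proof
    fix j assume jF: "j \<in> F"
    show "j \<in> {i0, Suc i0}"
    proof (rule ccontr)
      assume "j \<notin> {i0, Suc i0}"
      with i0le[OF jF] have j2: "Suc (Suc i0) \<le> j" by auto
      have jN: "j \<le> Suc N" using jF F_def by auto
      have t0: "t i0 \<in> P" using i0F F_def by auto
      have tj: "t j \<in> P" using jF F_def by auto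
      have t2: "t (Suc (Suc i0)) \<in> P"
      proof (cases "j = Suc (Suc i0)")
        case True then show ?thesis using tj by simp
      next
        case False
        then have "t (Suc (Suc i0)) < t j" using mono j2 jN by auto
        moreover have "t i0 < t (Suc (Suc i0))" using mono j2 jN by auto
        ultimately show ?thesis using bP t0 tj unfolding betw_def by blast
      qed
      have "Suc (Suc i0) \<le> Suc N" using j2 jN by simp
      then have m1: "t i0 < t (Suc i0)" "t (Suc i0) < t (Suc (Suc i0))" using mono by auto
      have t1: "t (Suc i0) \<in> P"
        using bP t0 t2 m1 unfolding betw_def by blast
      have a1: "f (t i0) * f (t (Suc i0)) < 0" using alt j2 jN by auto
      have a2: "f (t (Suc i0)) * f (t (Suc (Suc i0))) < 0" using alt j2 jN by auto
      show False using nP t0 t1 t2 a1 a2 m1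
        unfolding noalt_def by blast
    qed
  qed
  have "card F \<le> card {i0, Suc i0}" by (rule card_mono) (use sub in auto)
  also have "\<dots> \<le> 2" by (simp add: card_insert_if)
  finally show ?thesis unfolding F_def .
qed

lemma comb:
  fixes P :: "nat \<Rightarrow> real set"
  assumes "finite I" "D \<subseteq> (\<Union>p\<in>I. P p)" "\<And>p. p \<in> I \<Longrightarrow> betw (P p)"
    "\<And>p. p \<in> I \<Longrightarrow> noalt f (P p)"
  shows "sign_changes_at_most (2 * card I) f D"
  unfolding sign_changes_at_most_def
proof
  assume "\<exists>t. (\<forall>i\<le>Suc (2 * card I). t i \<in> D) \<and>
        (\<forall>i\<le>2 * card I. t i < t (Suc i) \<and> f (t i) * f (t (Suc i)) < 0)"
  then obtain t where tD: "\<forall>i\<le>Suc (2 * card I). t i \<in> D"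
    and alt: "\<forall>i\<le>2 * card I. t i < t (Suc i) \<and> f (t i) * f (t (Suc i)) < 0" by blast
  define N where "N = 2 * card I"
  have "{..Suc N} \<subseteq> (\<Union>p\<in>I. {i. i \<le> Suc N \<and> t i \<in> P p})"
    using tD assms(2) unfolding N_def by auto
  then have "card {..Suc N} \<le> card (\<Union>p\<in>I. {i. i \<le> Suc N \<and> t i \<in> P p})"
    by (intro card_mono) (use assms(1) in auto)
  also have "\<dots> \<le> (\<Sum>p\<in>I. card {i. i \<le> Suc N \<and> t i \<in> P p})"
    by (rule card_UN_le[OF assms(1)])
  also have "\<dots> \<le> (\<Sum>p\<in>I. 2)"
    by (rule sum_mono, rule fiber_card) (use alt assms(3,4) N_def in auto)
  finally show False unfolding N_def by simp
qed



lemma pos_mult_neg: "c > 0 \<Longrightarrow> c * q < 0 \<Longrightarrow> q < (0::real)"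
  by (simp add: mult_less_0_iff)

lemma alt3: "a \<le> b \<Longrightarrow> b \<le> c \<Longrightarrow> a * b < 0 \<Longrightarrow> b * c < (0::real) \<Longrightarrow> False"
  by (auto simp add: mult_less_0_iff)

lemma betw_seg: "betw S \<Longrightarrow> x \<in> S \<Longrightarrow> y \<in> S \<Longrightarrow> {x..y} \<subseteq> S"
proof
  fix w assume "betw S" "x \<in> S" "y \<in> S" "w \<in> {x..y}"
  then have "w = x \<or> w = y \<or> (x < w \<and> w < y)" by auto
  then show "w \<in> S" using \<open>betw S\<close> \<open>x \<in> S\<close> \<open>y \<in> S\<close> unfolding betw_def by blast
qed

lemma noalt_mono:
  assumes fC: "\<And>x. x \<in> J \<Longrightarrow> f x = C x * H x \<and> C x > 0"
    and mono: "(\<forall>x\<in>J. \<forall>y\<in>J. x < y \<longrightarrow> H x \<le> H y) \<or> (\<forall>x\<in>J. \<forall>y\<in>J. x < y \<longrightarrow> H y \<le> (H x::real))"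
  shows "noalt f J"
  unfolding noalt_def
proof (intro allI impI notI)
  fix x y z assume xyz: "x \<in> J" "y \<in> J" "z \<in> J" "x < y" "y < z"
    and a: "f x * f y < 0 \<and> f y * f z < 0"
  have s1: "H x * H y < 0"
  proof -
    have "f x * f y = (C x * C y) * (H x * H y)" using fC xyz by (simp add: algebra_simps)
    moreover have "C x * C y > 0" using fC xyz by auto
    ultimately show ?thesis using a pos_mult_neg[of "C x * C y" "H x * H y"] by simp
  qed
  have s2: "H y * H z < 0"
  proof -
    have "f y * f z = (C y * C z) * (H y * H z)" using fC xyz by (simp add: algebra_simps)
    moreover have "C y * C z > 0" using fC xyz by auto
    ultimately show ?thesis using a pos_mult_neg[of "C y * C z" "H y * H z"] by simp
  qed
  from mono show False
  proof
    assume m: "\<forall>x\<in>J. \<forall>y\<in>J. x < y \<longrightarrow> H x \<le> H y"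
    have "H x \<le> H y" "H y \<le> H z" using m xyz by auto
    then show False using s1 s2 alt3 by blast
  next
    assume m: "\<forall>x\<in>J. \<forall>y\<in>J. x < y \<longrightarrow> H y \<le> H x"
    have "H y \<le> H x" "H z \<le> H y" using m xyz by auto
    then show False using s1 s2 alt3[of "H z" "H y" "H x"] by (simp add: mult.commute)
  qed
qed

lemma side_pieces:
  fixes S :: "real set" and \<epsilon> :: real
  assumes bS: "betw S"
    and Hd: "\<And>x. x \<in> S \<Longrightarrow> (H has_real_derivative H' x) (at x)"
    and Hs: "\<And>x. x \<in> S \<Longrightarrow> (M x \<ge> 0 \<longrightarrow> H' x \<ge> 0) \<and> (M x \<le> 0 \<longrightarrow> H' x \<le> 0)"
    and Md: "\<And>x. x \<in> S \<Longrightarrow> (M has_real_derivative M' x) (at x)"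
    and eps: "\<epsilon> = 1 \<or> \<epsilon> = -1" and Mp: "\<And>x. x \<in> S \<Longrightarrow> \<epsilon> * M' x > 0"
    and fC: "\<And>x. x \<in> S \<Longrightarrow> f x = C x * H x \<and> C x > 0"
  shows "betw {x\<in>S. M x \<ge> 0} \<and> noalt f {x\<in>S. M x \<ge> 0} \<and>
         betw {x\<in>S. M x \<le> 0} \<and> noalt f {x\<in>S. M x \<le> 0}"
proof -
  have seg: "{x..y} \<subseteq> S" if "x \<in> S" "y \<in> S" for x y
    using betw_seg bS that by blast
  have Mm: "\<epsilon> * (M y - M x) > 0" if xy: "x \<in> S" "y \<in> S" "x < y" for x y
  proof -
    have "\<exists>z>x. z < y \<and> M y - M x = (y - x) * M' z"
      by (rule MVT2[OF \<open>x < y\<close>]) (use Md seg[OF xy(1,2)] in auto)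
    then obtain z where z: "x < z" "z < y" "M y - M x = (y - x) * M' z" by blast
    have "z \<in> S" using seg[OF xy(1,2)] z by auto
    then have "\<epsilon> * M' z > 0" using Mp by auto
    moreover have "\<epsilon> * (M y - M x) = (y - x) * (\<epsilon> * M' z)" using z by simp
    ultimately show ?thesis using \<open>x<y\<close> by (metis diff_gt_0_iff_gt mult_pos_pos)
  qed
  have b1: "betw {x\<in>S. M x \<ge> 0}" unfolding betw_def
  proof (intro allI impI)
    fix x y z assume h: "x \<in> {x\<in>S. M x \<ge> 0}" "z \<in> {x\<in>S. M x \<ge> 0}" "x < y" "y < z"
    then have yS: "y \<in> S" using bS unfolding betw_def by blast
    have "M y \<ge> 0" using eps Mm[of x y] Mm[of y z] h yS by auto
    then show "y \<in> {x\<in>S. M x \<ge> 0}" using yS by auto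
  qed
  have b2: "betw {x\<in>S. M x \<le> 0}" unfolding betw_def
  proof (intro allI impI)
    fix x y z assume h: "x \<in> {x\<in>S. M x \<le> 0}" "z \<in> {x\<in>S. M x \<le> 0}" "x < y" "y < z"
    then have yS: "y \<in> S" using bS unfolding betw_def by blast
    have "M y \<le> 0" using eps Mm[of x y] Mm[of y z] h yS by auto
    then show "y \<in> {x\<in>S. M x \<le> 0}" using yS by auto
  qed
  have H1: "H x \<le> H y" if xy: "x \<in> {x\<in>S. M x \<ge> 0}" "y \<in> {x\<in>S. M x \<ge> 0}" "x < y" for x y
  proof -
    have sg: "{x..y} \<subseteq> {x\<in>S. M x \<ge> 0}" using betw_seg[OF b1] xy(1,2) by blast
    have "\<exists>z>x. z < y \<and> H y - H x = (y - x) * H' z"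
      by (rule MVT2[OF \<open>x < y\<close>]) (use Hd sg in auto)
    then obtain z where z: "x < z" "z < y" "H y - H x = (y - x) * H' z" by blast
    have "z \<in> {x..y}" using z by auto
    then have "z \<in> {x\<in>S. M x \<ge> 0}" using sg by blast
    then have "H' z \<ge> 0" using Hs by auto
    moreover have "(y - x) * H' z \<ge> 0" using \<open>x<y\<close> calculation by simp
    ultimately show ?thesis using z by linarith
  qed
  have H2: "H y \<le> H x" if xy: "x \<in> {x\<in>S. M x \<le> 0}" "y \<in> {x\<in>S. M x \<le> 0}" "x < y" for x y
  proof -
    have sg: "{x..y} \<subseteq> {x\<in>S. M x \<le> 0}" using betw_seg[OF b2] xy(1,2) by blast
    have "\<exists>z>x. z < y \<and> H y - H x = (y - x) * H' z"
      by (rule MVT2[OF \<open>x < y\<close>]) (use Hd sg in auto)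
    then obtain z where z: "x < z" "z < y" "H y - H x = (y - x) * H' z" by blast
    have "z \<in> {x..y}" using z by auto
    then have "z \<in> {x\<in>S. M x \<le> 0}" using sg by blast
    then have "H' z \<le> 0" using Hs by auto
    moreover have "(y - x) * H' z \<le> 0" using \<open>x<y\<close> calculation by (simp add: mult_nonneg_nonpos)
    ultimately show ?thesis using z by linarith
  qed
  have n1: "noalt f {x\<in>S. M x \<ge> 0}"
    by (rule noalt_mono[where C=C and H=H]) (use fC H1 in auto)
  have n2: "noalt f {x\<in>S. M x \<le> 0}"
    by (rule noalt_mono[where C=C and H=H]) (use fC H2 in auto)
  show ?thesis using b1 b2 n1 n2 by blast
qed



definition pp :: "real^2 \<Rightarrow> real \<Rightarrow> real" where
  "pp x0 \<alpha> = cos \<alpha> * x0$1 + sin \<alpha> * x0$2"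
definition pq :: "real^2 \<Rightarrow> real \<Rightarrow> real" where
  "pq x0 \<alpha> = cos \<alpha> * x0$2 - sin \<alpha> * x0$1"

lemma pp_der: "(pp x0 has_real_derivative pq x0 \<alpha>) (at \<alpha>)"
  unfolding pp_def[abs_def] pq_def
  by (auto intro!: derivative_eq_intros)

lemma pq_der: "(pq x0 has_real_derivative - pp x0 \<alpha>) (at \<alpha>)"
  unfolding pp_def pq_def[abs_def]
  by (auto intro!: derivative_eq_intros)

lemma Phi_eq: "Phi m x0 = (\<lambda>\<alpha>. - of_int m * pp x0 \<alpha>)"
  by (rule ext) (simp add: Phi_def avec_def inner_vec_def sum_2 pp_def)

lemma Phi_der: "(Phi m x0 has_real_derivative - of_int m * pq x0 \<alpha>) (at \<alpha>)"
  unfolding Phi_eq by (auto intro!: derivative_eq_intros pp_der)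

lemma dPhi: "deriv (Phi m x0) = (\<lambda>\<alpha>. - of_int m * pq x0 \<alpha>)"
  by (rule ext) (rule DERIV_imp_deriv[OF Phi_der])

lemma ddPhi: "deriv (deriv (Phi m x0)) = (\<lambda>\<alpha>. of_int m * pp x0 \<alpha>)"
  unfolding dPhi
  by (rule ext, rule DERIV_imp_deriv) (auto intro!: derivative_eq_intros pq_der)

lemma Phi_l_der: "(Phi_l \<kappa> m x0 l has_real_derivative - of_int m * pq x0 \<alpha> - of_int l / \<kappa>) (at \<alpha>)"
proof -
  have "((\<lambda>\<alpha>. Phi m x0 \<alpha> - (of_int l / \<kappa>) * \<alpha>) has_real_derivative
      - of_int m * pq x0 \<alpha> - of_int l / \<kappa>) (at \<alpha>)"
    using DERIV_diff[OF Phi_der[of m x0 \<alpha>] DERIV_cmult_Id[of "of_int l / \<kappa>"]] by simp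
  then show ?thesis unfolding Phi_l_def[abs_def] .
qed

lemma dPhi_l: "deriv (Phi_l \<kappa> m x0 l) = (\<lambda>\<alpha>. - of_int m * pq x0 \<alpha> - of_int l / \<kappa>)"
  by (rule ext) (rule DERIV_imp_deriv[OF Phi_l_der])

lemma DERIV_abs_nz:
  assumes "(f has_real_derivative d) (at x)" "f x \<noteq> 0"
  shows "((\<lambda>x. \<bar>f x\<bar>) has_real_derivative sgn (f x) * d) (at x)"
proof -
  have e: "(\<lambda>x. \<bar>f x\<bar>) = (\<lambda>x. sqrt ((f x)\<^sup>2))" by (simp add: real_sqrt_abs)
  have d1: "((\<lambda>x. (f x)\<^sup>2) has_real_derivative 2 * f x * d) (at x)"
    using assms by (auto intro!: derivative_eq_intros)
  have d2: "DERIV sqrt ((f x)\<^sup>2) :> inverse (sqrt ((f x)\<^sup>2)) / 2"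
    by (rule DERIV_real_sqrt) (use assms in simp)
  have "((\<lambda>x. sqrt ((f x)\<^sup>2)) has_real_derivative
        inverse (sqrt ((f x)\<^sup>2)) / 2 * (2 * f x * d)) (at x)"
    by (rule DERIV_chain2[OF d2 d1])
  moreover have "inverse (sqrt ((f x)\<^sup>2)) / 2 * (2 * f x * d) = sgn (f x) * d"
    using assms(2) by (simp add: real_sqrt_abs sgn_real_def divide_simps) 
  ultimately show ?thesis unfolding e by (metis (no_types, lifting))
qed



lemma g_deriv:
  assumes "(hh has_real_derivative hp) (at x)" "(u has_real_derivative hh x / \<kappa>) (at x)"
    "u x \<noteq> 0" "sin (pi * hh x) \<noteq> 0"
  shows "((\<lambda>\<alpha>. sqrt \<bar>u \<alpha>\<bar> / sin (pi * hh \<alpha>)) has_real_derivative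
     (sgn (u x) * (hh x / \<kappa>) * inverse (sqrt \<bar>u x\<bar>) / 2 * sin (pi * hh x)
       - cos (pi * hh x) * (pi * hp) * sqrt \<bar>u x\<bar>) / (sin (pi * hh x))\<^sup>2) (at x)"
proof -
  have d1: "((\<lambda>\<alpha>. \<bar>u \<alpha>\<bar>) has_real_derivative sgn (u x) * (hh x / \<kappa>)) (at x)"
    by (rule DERIV_abs_nz[OF assms(2,3)])
  have d2: "((\<lambda>\<alpha>. sqrt \<bar>u \<alpha>\<bar>) has_real_derivative inverse (sqrt \<bar>u x\<bar>) / 2 * (sgn (u x) * (hh x / \<kappa>))) (at x)"
    by (rule DERIV_chain2[OF DERIV_real_sqrt d1]) (use assms(3) in simp)
  have d3: "((\<lambda>\<alpha>. sin (pi * hh \<alpha>)) has_real_derivative cos (pi * hh x) * (pi * hp)) (at x)"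
    by (rule DERIV_chain2[OF DERIV_sin]) (auto intro!: derivative_eq_intros assms(1))
  show ?thesis
    using DERIV_quotient[OF d2 d3 assms(4)] by (simp add: power2_eq_square mult_ac)
qed

lemma H_deriv:
  assumes "(hh has_real_derivative hpx) (at x)" "(hp has_real_derivative -(hh x + l)) (at x)"
    "(u has_real_derivative hh x / \<kappa>) (at x)" "hp x \<noteq> 0" "cos (pi * hh x) \<noteq> 0" "hpx = hp x" "\<kappa> \<noteq> 0"
  shows "((\<lambda>x. hh x * tan (pi * hh x) / (2 * pi * \<kappa> * hp x) - u x)
    has_real_derivative
     ((hp x)\<^sup>2 * (sin (pi * hh x) * cos (pi * hh x) + pi * hh x * (1 - 2 * (cos (pi * hh x))\<^sup>2))
       + hh x * (hh x + l) * sin (pi * hh x) * cos (pi * hh x))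
     / (2 * pi * \<kappa> * (hp x)\<^sup>2 * (cos (pi * hh x))\<^sup>2)) (at x)"
proof -
  have dt: "((\<lambda>x. tan (pi * hh x)) has_real_derivative inverse ((cos (pi * hh x))\<^sup>2) * (pi * hp x)) (at x)"
    by (rule DERIV_chain2[where g="\<lambda>x. pi * hh x", OF DERIV_tan[OF assms(5)]]) (auto intro!: derivative_eq_intros assms(1) simp: assms(6))
  show ?thesis
    apply (rule derivative_eq_intros refl assms(1,2,3) dt | simp add: assms(4,5,7))+
    using assms(4,5,7) unfolding assms(6)
    apply (simp add: field_simps tan_def)
    apply (simp add: power2_eq_square power4_eq_xxxx algebra_simps)
    done
qed



lemma M_deriv:
  assumes "(hh has_real_derivative hpx) (at x)" "(hp has_real_derivative -(hh x + l)) (at x)"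
    "hp x \<noteq> 0" "hh x \<noteq> 0" "sin (2 * pi * hh x) \<noteq> 0" "hpx = hp x"
  shows "((\<lambda>x. 1 / (2 * pi * hh x) - cos (2 * pi * hh x) / sin (2 * pi * hh x)
               + (hh x + l) / (2 * pi * (hp x)\<^sup>2))
    has_real_derivative
     2 * pi * hp x * (((sin (2 * pi * hh x))\<^sup>2 + (cos (2 * pi * hh x))\<^sup>2) / (sin (2 * pi * hh x))\<^sup>2
        - 1 / (2 * pi * hh x)\<^sup>2)
     + 2 * pi * hp x * ((hp x)\<^sup>2 + 2 * (hh x + l)\<^sup>2) / (4 * pi\<^sup>2 * (hp x)^4)) (at x)"
  apply (rule derivative_eq_intros refl assms(1,2) | simp add: assms(3,4,5))+
  using assms(3,4,5) unfolding assms(6)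
  apply (simp add: field_simps)
  apply (insert sin_cos_squared_add[of "pi * (hh x * 2)"])
  apply algebra
  done

lemma N1_M:
  assumes "hp \<noteq> 0" "h \<noteq> 0" "sin (2 * pi * h) \<noteq> 0"
  shows "hp\<^sup>2 * (sin (pi * h) * cos (pi * h) + pi * h * (1 - 2 * (cos (pi * h))\<^sup>2))
       + h * (h + l) * sin (pi * h) * cos (pi * h)
     = (2 * pi * h * sin (2 * pi * h) * hp\<^sup>2 / 2) *
       (1 / (2 * pi * h) - cos (2 * pi * h) / sin (2 * pi * h) + (h + l) / (2 * pi * hp\<^sup>2))"
proof -
  have s: "sin (2 * pi * h) = 2 * sin (pi * h) * cos (pi * h)"
    using sin_double[of "pi * h"] by (simp add: mult.assoc)
  have c: "cos (2 * pi * h) = 2 * (cos (pi * h))\<^sup>2 - 1"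
    using cos_double_cos[of "pi * h"] by (simp add: mult.assoc)
  show ?thesis using assms unfolding s c
    by (simp add: field_simps)
qed



lemma const_sign:
  assumes cont: "\<And>x. isCont f x" and nz: "\<And>z. z \<in> {a<..<b} \<Longrightarrow> f z \<noteq> (0::real)" and ab: "a < (b::real)"
  shows "\<exists>\<epsilon>. (\<epsilon> = 1 \<or> \<epsilon> = -1) \<and> (\<forall>z\<in>{a<..<b}. \<epsilon> * f z > 0)"
proof -
  define c where "c = (a + b) / 2"
  have cab: "c \<in> {a<..<b}" using ab unfolding c_def by auto
  define \<epsilon> where "\<epsilon> = (if f c > 0 then 1 else (-1::real))"
  define g where "g x = \<epsilon> * f x" for x
  have gc: "g c > 0" using nz[OF cab] unfolding g_def \<epsilon>_def by auto
  have gcont: "continuous_on S g" for S unfolding g_def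
    by (intro continuous_at_imp_continuous_on ballI continuous_intros cont)
  have "g z > 0" if z: "z \<in> {a<..<b}" for z
  proof (rule ccontr)
    assume "\<not> g z > 0"
    then have gz: "g z \<le> 0" by simp
    show False
    proof (cases "z \<le> c")
      case True
      obtain x where x: "z \<le> x" "x \<le> c" "g x = 0"
        using IVT'[of g z 0 c, OF gz _ True gcont] gc by auto
      then have "x \<in> {a<..<b}" using z cab by auto
      then show False using nz x unfolding g_def \<epsilon>_def by (auto split: if_splits)
    next
      case False
      obtain x where x: "c \<le> x" "x \<le> z" "g x = 0"
        using IVT2'[of g z 0 c, OF gz _ _ gcont] gc False by auto
      then have "x \<in> {a<..<b}" using z cab by auto
      then show False using nz x unfolding g_def \<epsilon>_def by (auto split: if_splits)
    qed
  qed
  then show ?thesis unfolding g_def \<epsilon>_def by (intro exI[of _ "if f c > 0 then 1 else (-1::real)"]) auto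
qed



lemma sinpos: assumes "0 < \<bar>t\<bar>" "\<bar>t\<bar> < 1" shows "t * sin (pi * t) > 0"
proof (cases "t > 0")
  case True
  then have "sin (pi * t) > 0" using assms by (intro sin_gt_zero) auto
  then show ?thesis using True by simp
next
  case False
  then have t: "t < 0" using assms by auto
  have "pi * (-t) < pi * 1" using assms t by (intro mult_strict_left_mono) auto
  moreover have "0 < pi * (-t)" using t pi_gt_zero by (intro mult_pos_pos) auto
  ultimately have "sin (pi * (-t)) > 0" by (intro sin_gt_zero) auto
  then have "sin (pi * t) < 0" by simp
  then show ?thesis using t by (simp add: mult_neg_neg)
qed

lemma alg_fK:
  fixes e r S C P k h :: real
  assumes "e = 1 \<or> e = -1" "r > 0" "S \<noteq> 0" "C \<noteq> 0" "P \<noteq> 0" "k \<noteq> 0"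
  shows "(e * (h / k) * inverse r / 2 * S - C * (pi * P) * r) / S\<^sup>2
       = (e * P * pi * C / (r * S\<^sup>2)) * (h * (S / C) / (2 * pi * k * P) - e * r\<^sup>2)"
  using assms by (auto simp: field_simps power2_eq_square)



lemma sgl: "y = A * m / B \<Longrightarrow> A > 0 \<Longrightarrow> B > 0 \<Longrightarrow> (m \<ge> 0 \<longrightarrow> y \<ge> 0) \<and> (m \<le> 0 \<longrightarrow> y \<le> (0::real))"
  by (auto simp: mult_nonneg_nonpos divide_nonpos_pos)

lemma core:
  fixes \<kappa> l a b \<alpha>0 :: real and hh hp u :: "real \<Rightarrow> real"
  assumes kp: "\<kappa> > 0" and ab: "a < b" and a0: "\<alpha>0 \<in> {a..b}"
    and hhd: "\<And>x. (hh has_real_derivative hp x) (at x)"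
    and hpd: "\<And>x. (hp has_real_derivative -(hh x + l)) (at x)"
    and ud: "\<And>x. (u has_real_derivative hh x / \<kappa>) (at x)"
    and u0: "u \<alpha>0 = 0"
    and hpnz: "\<And>x. x \<in> {a<..<b} \<Longrightarrow> hp x \<noteq> 0"
    and hh0: "hh \<alpha>0 = 0"
    and hhb: "\<And>x. x \<in> {a..b} \<Longrightarrow> \<bar>hh x\<bar> \<le> 1/2"
  shows "sign_changes_at_most 12 (deriv (\<lambda>\<alpha>. sqrt \<bar>u \<alpha>\<bar> / sin (pi * hh \<alpha>)))
           {\<alpha>\<in>{a..b}. hh \<alpha> \<noteq> 0}"
proof -
  obtain \<epsilon> where eps: "\<epsilon> = 1 \<or> \<epsilon> = -1" and ep: "\<And>z. z \<in> {a<..<b} \<Longrightarrow> \<epsilon> * hp z > 0"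
    using const_sign[OF DERIV_isCont[OF hpd] hpnz ab] by blast
  have hmono: "\<epsilon> * (hh y - hh x) > 0" if xy: "a \<le> x" "x < y" "y \<le> b" for x y
  proof -
    have "\<exists>z>x. z < y \<and> hh y - hh x = (y - x) * hp z"
      by (rule MVT2[OF \<open>x < y\<close>]) (use hhd in auto)
    then obtain z where z: "x < z" "z < y" "hh y - hh x = (y - x) * hp z" by blast
    have "\<epsilon> * hp z > 0" using ep z xy by auto
    moreover have "\<epsilon> * (hh y - hh x) = (y - x) * (\<epsilon> * hp z)" using z by simp
    ultimately show ?thesis using \<open>x<y\<close> by (metis diff_gt_0_iff_gt mult_pos_pos)
  qed
  have hhlt: "\<bar>hh x\<bar> < 1/2" if x: "x \<in> {a<..<b}" for x
  proof -
    have "\<epsilon> * (hh b - hh x) > 0" "\<epsilon> * (hh x - hh a) > 0" using hmono x by auto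
    moreover have "\<bar>hh a\<bar> \<le> 1/2" "\<bar>hh b\<bar> \<le> 1/2" using hhb ab by auto
    ultimately show ?thesis using eps by (auto simp: abs_le_iff abs_less_iff)
  qed
  have hhnz: "hh x \<noteq> 0" if "x \<in> {a..b}" "x \<noteq> \<alpha>0" for x
  proof
    assume "hh x = 0"
    show False
    proof (cases "x < \<alpha>0")
      case True then show ?thesis using hmono[of x \<alpha>0] that a0 hh0 \<open>hh x = 0\<close> by auto
    next
      case False then show ?thesis using hmono[of \<alpha>0 x] that a0 hh0 \<open>hh x = 0\<close> by auto
    qed
  qed
  have usgn: "\<epsilon> * u x > 0" if x: "x \<in> {a..b}" "x \<noteq> \<alpha>0" for x
  proof (cases "x < \<alpha>0")
    case True
    have "\<exists>z>x. z < \<alpha>0 \<and> u \<alpha>0 - u x = (\<alpha>0 - x) * (hh z / \<kappa>)"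
      by (rule MVT2[OF True]) (use ud in auto)
    then obtain z where z: "x < z" "z < \<alpha>0" "u \<alpha>0 - u x = (\<alpha>0 - x) * (hh z / \<kappa>)" by blast
    have "\<epsilon> * (hh \<alpha>0 - hh z) > 0" using hmono[of z \<alpha>0] z x a0 by auto
    then have "\<epsilon> * hh z < 0" using hh0 by simp
    then have "\<epsilon> * hh z / \<kappa> < 0" using kp by (simp add: divide_neg_pos)
    then have "(\<alpha>0 - x) * (\<epsilon> * hh z / \<kappa>) < 0" using True mult_pos_neg[of "\<alpha>0 - x" "\<epsilon> * hh z / \<kappa>"] by linarith
    moreover have ux: "u x = - ((\<alpha>0 - x) * (hh z / \<kappa>))" using z u0 by linarith
    moreover have "\<epsilon> * u x = - ((\<alpha>0 - x) * (\<epsilon> * hh z / \<kappa>))" unfolding ux by (simp add: field_simps)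
    ultimately show ?thesis by linarith
  next
    case False
    then have xa: "\<alpha>0 < x" using x by auto
    have "\<exists>z>\<alpha>0. z < x \<and> u x - u \<alpha>0 = (x - \<alpha>0) * (hh z / \<kappa>)"
      by (rule MVT2[OF xa]) (use ud in auto)
    then obtain z where z: "\<alpha>0 < z" "z < x" "u x - u \<alpha>0 = (x - \<alpha>0) * (hh z / \<kappa>)" by blast
    have "\<epsilon> * (hh z - hh \<alpha>0) > 0" using hmono[of \<alpha>0 z] z x a0 by auto
    then have "\<epsilon> * hh z > 0" using hh0 by simp
    then have "\<epsilon> * hh z / \<kappa> > 0" using kp by simp
    then have "(x - \<alpha>0) * (\<epsilon> * hh z / \<kappa>) > 0" using xa mult_pos_pos[of "x - \<alpha>0" "\<epsilon> * hh z / \<kappa>"] by linarith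
    moreover have ux: "u x = (x - \<alpha>0) * (hh z / \<kappa>)" using z u0 by linarith
    moreover have "\<epsilon> * u x = (x - \<alpha>0) * (\<epsilon> * hh z / \<kappa>)" unfolding ux by (simp add: field_simps)
    ultimately show ?thesis by linarith
  qed

  define g where "g = (\<lambda>\<alpha>. sqrt \<bar>u \<alpha>\<bar> / sin (pi * hh \<alpha>))"
  define K where "K x = \<epsilon> * hp x * pi * cos (pi * hh x) / (sqrt \<bar>u x\<bar> * (sin (pi * hh x))\<^sup>2)" for x
  define H where "H x = hh x * tan (pi * hh x) / (2 * pi * \<kappa> * hp x) - u x" for x
  define H' where "H' x = ((hp x)\<^sup>2 * (sin (pi * hh x) * cos (pi * hh x) + pi * hh x * (1 - 2 * (cos (pi * hh x))\<^sup>2))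
       + hh x * (hh x + l) * sin (pi * hh x) * cos (pi * hh x))
     / (2 * pi * \<kappa> * (hp x)\<^sup>2 * (cos (pi * hh x))\<^sup>2)" for x
  define M where "M x = 1 / (2 * pi * hh x) - cos (2 * pi * hh x) / sin (2 * pi * hh x)
               + (hh x + l) / (2 * pi * (hp x)\<^sup>2)" for x
  define M' where "M' x = 2 * pi * hp x * (((sin (2 * pi * hh x))\<^sup>2 + (cos (2 * pi * hh x))\<^sup>2) / (sin (2 * pi * hh x))\<^sup>2
        - 1 / (2 * pi * hh x)\<^sup>2)
     + 2 * pi * hp x * ((hp x)\<^sup>2 + 2 * (hh x + l)\<^sup>2) / (4 * pi\<^sup>2 * (hp x)^4)" for x
  have Hf: "H = (\<lambda>x. hh x * tan (pi * hh x) / (2 * pi * \<kappa> * hp x) - u x)" unfolding H_def by auto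
  have Mf: "M = (\<lambda>x. 1 / (2 * pi * hh x) - cos (2 * pi * hh x) / sin (2 * pi * hh x)
               + (hh x + l) / (2 * pi * (hp x)\<^sup>2))" unfolding M_def by auto
  have facts: "hh x \<noteq> 0 \<and> hp x \<noteq> 0 \<and> cos (pi * hh x) > 0 \<and> sin (pi * hh x) \<noteq> 0
      \<and> sin (2 * pi * hh x) \<noteq> 0 \<and> (2 * pi * hh x) * sin (2 * pi * hh x) > 0
      \<and> (sin (2 * pi * hh x))\<^sup>2 \<le> (2 * pi * hh x)\<^sup>2 \<and> \<epsilon> * u x > 0 \<and> \<epsilon> * hp x > 0"
    if x: "x \<in> {a<..<b}" "x \<noteq> \<alpha>0" for x
  proof -
    have h0: "hh x \<noteq> 0" using hhnz x by auto
    have h1: "\<bar>hh x\<bar> < 1/2" using hhlt x by auto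
    have c: "cos (pi * hh x) > 0"
    proof (rule cos_gt_zero_pi)
      have "\<bar>pi * hh x\<bar> < pi * (1/2)" using h1 pi_gt_zero by (simp add: abs_mult)
      then have "\<bar>pi * hh x\<bar> < pi / 2" by simp
      then show "- (pi / 2) < pi * hh x" "pi * hh x < pi / 2"
        using abs_less_iff[of "pi * hh x" "pi / 2"] by linarith+
    qed
    have s1: "hh x * sin (pi * hh x) > 0" using sinpos[of "hh x"] h0 h1 by auto
    have s2: "(2 * hh x) * sin (pi * (2 * hh x)) > 0" using sinpos[of "2 * hh x"] h0 h1 by auto
    have s2': "(2 * pi * hh x) * sin (2 * pi * hh x) > 0"
    proof -
      have e: "2 * pi * hh x = pi * (2 * hh x)" by simp
      show ?thesis unfolding e using s2 pi_gt_zero by (metis mult.assoc mult_pos_pos)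
    qed
    have sq: "(sin (2 * pi * hh x))\<^sup>2 \<le> (2 * pi * hh x)\<^sup>2"
      using abs_sin_x_le_abs_x[of "2 * pi * hh x"] by (simp add: abs_le_square_iff)
    show ?thesis using h0 c s1 s2' sq usgn[of x] ep[of x] x hpnz[of x] by auto
  qed
  have fK: "deriv g x = K x * H x \<and> K x > 0" if x: "x \<in> {a<..<b}" "x \<noteq> \<alpha>0" for x
  proof -
    note fx = facts[OF x]
    have ux: "u x \<noteq> 0" using fx by auto
    have gd: "(g has_real_derivative
     (sgn (u x) * (hh x / \<kappa>) * inverse (sqrt \<bar>u x\<bar>) / 2 * sin (pi * hh x)
       - cos (pi * hh x) * (pi * hp x) * sqrt \<bar>u x\<bar>) / (sin (pi * hh x))\<^sup>2) (at x)"
      unfolding g_def by (rule g_deriv[OF hhd ud ux]) (use fx in auto)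
    have sg: "sgn (u x) = \<epsilon>" using eps fx by (auto simp: sgn_real_def)
    have ab: "\<bar>u x\<bar> = \<epsilon> * u x" using eps fx by auto
    define r where "r = sqrt \<bar>u x\<bar>"
    have r0: "r > 0" unfolding r_def using ux by simp
    have ur: "u x = \<epsilon> * r\<^sup>2" unfolding r_def using eps ab by auto
    have "deriv g x = (\<epsilon> * (hh x / \<kappa>) * inverse r / 2 * sin (pi * hh x)
       - cos (pi * hh x) * (pi * hp x) * r) / (sin (pi * hh x))\<^sup>2"
      using DERIV_imp_deriv[OF gd] sg unfolding r_def by simp
    also have "\<dots> = (\<epsilon> * hp x * pi * cos (pi * hh x) / (r * (sin (pi * hh x))\<^sup>2)) *
        (hh x * (sin (pi * hh x) / cos (pi * hh x)) / (2 * pi * \<kappa> * hp x) - \<epsilon> * r\<^sup>2)"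
      by (rule alg_fK) (use eps r0 fx kp in auto)
    also have "\<dots> = K x * H x" unfolding K_def H_def r_def[symmetric] ur[symmetric] tan_def by simp
    finally have e1: "deriv g x = K x * H x" .
    have "K x = (\<epsilon> * hp x) * pi * cos (pi * hh x) / (r * (sin (pi * hh x))\<^sup>2)"
      unfolding K_def r_def by simp
    moreover have "(\<epsilon> * hp x) * pi * cos (pi * hh x) > 0" using fx by simp
    moreover have "r * (sin (pi * hh x))\<^sup>2 > 0" using r0 fx by simp
    ultimately have "K x > 0" by simp
    then show ?thesis using e1 by simp
  qed
  have Hd: "(H has_real_derivative H' x) (at x)" if x: "x \<in> {a<..<b}" "x \<noteq> \<alpha>0" for x
    unfolding Hf H'_def by (rule H_deriv[OF hhd hpd ud]) (use facts[OF x] kp in auto)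
  have Hs: "(M x \<ge> 0 \<longrightarrow> H' x \<ge> 0) \<and> (M x \<le> 0 \<longrightarrow> H' x \<le> 0)" if x: "x \<in> {a<..<b}" "x \<noteq> \<alpha>0" for x
  proof -
    note fx = facts[OF x]
    have "H' x = ((2 * pi * hh x * sin (2 * pi * hh x) * (hp x)\<^sup>2 / 2) * M x)
        / (2 * pi * \<kappa> * (hp x)\<^sup>2 * (cos (pi * hh x))\<^sup>2)"
      unfolding H'_def M_def by (subst N1_M) (use fx in auto)
    moreover have "2 * pi * hh x * sin (2 * pi * hh x) * (hp x)\<^sup>2 / 2 > 0"
    proof -
      have q: "2 * pi * hh x * sin (2 * pi * hh x) > 0" using fx by blast
      have "2 * pi * hh x * sin (2 * pi * hh x) * (hp x)\<^sup>2 > 0"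
        by (rule mult_pos_pos[OF q]) (use fx in simp)
      then show ?thesis by (simp add: mult_ac)
    qed
    moreover have "2 * pi * \<kappa> * (hp x)\<^sup>2 * (cos (pi * hh x))\<^sup>2 > 0" using fx kp by simp
    ultimately show ?thesis by (rule sgl)
  qed
  have Md: "(M has_real_derivative M' x) (at x)" if x: "x \<in> {a<..<b}" "x \<noteq> \<alpha>0" for x
    unfolding Mf M'_def by (rule M_deriv[OF hhd hpd]) (use facts[OF x] in auto)
  have Mp: "\<epsilon> * M' x > 0" if x: "x \<in> {a<..<b}" "x \<noteq> \<alpha>0" for x
  proof -
    note fx = facts[OF x]
    define s2 where "s2 = sin (2 * pi * hh x)"
    define X where "X = 2 * pi * hh x"
    have s20: "s2\<^sup>2 > 0" using fx unfolding s2_def by simp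
    have X0: "X\<^sup>2 > 0" using fx unfolding X_def by simp
    have "1 / X\<^sup>2 \<le> 1 / s2\<^sup>2" using fx s20 unfolding s2_def X_def by (intro divide_left_mono) auto
    then have t1: "(s2\<^sup>2 + (cos (2 * pi * hh x))\<^sup>2) / s2\<^sup>2 - 1 / X\<^sup>2 \<ge> 0"
      unfolding s2_def by simp
    have t2: "2 * pi * ((hp x)\<^sup>2 + 2 * (hh x + l)\<^sup>2) / (4 * pi\<^sup>2 * (hp x)^4) > 0"
    proof -
      have "(hp x)\<^sup>2 > 0" using fx by simp
      then have "(hp x)\<^sup>2 + 2 * (hh x + l)\<^sup>2 > 0" by (simp add: add_pos_nonneg)
      then have "2 * pi * ((hp x)\<^sup>2 + 2 * (hh x + l)\<^sup>2) > 0" by simp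
      moreover have "4 * pi\<^sup>2 * (hp x)^4 > 0" using fx by simp
      ultimately show ?thesis by (rule divide_pos_pos)
    qed
    have "\<epsilon> * M' x = (\<epsilon> * hp x) * (2 * pi * ((s2\<^sup>2 + (cos (2 * pi * hh x))\<^sup>2) / s2\<^sup>2 - 1 / X\<^sup>2)
         + 2 * pi * ((hp x)\<^sup>2 + 2 * (hh x + l)\<^sup>2) / (4 * pi\<^sup>2 * (hp x)^4))"
      unfolding M'_def s2_def X_def by (simp add: algebra_simps)
    moreover have "2 * pi * ((s2\<^sup>2 + (cos (2 * pi * hh x))\<^sup>2) / s2\<^sup>2 - 1 / X\<^sup>2)
         + 2 * pi * ((hp x)\<^sup>2 + 2 * (hh x + l)\<^sup>2) / (4 * pi\<^sup>2 * (hp x)^4) > 0"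
      using t1 t2 by (simp add: add_nonneg_pos)
    moreover have "\<epsilon> * hp x > 0" using fx by blast
    ultimately show ?thesis by (metis mult_pos_pos)
  qed
  define S1 where "S1 = {a<..<\<alpha>0}"
  define S2 where "S2 = {\<alpha>0<..<b}"
  have S1i: "x \<in> {a<..<b} \<and> x \<noteq> \<alpha>0" if "x \<in> S1" for x using that a0 unfolding S1_def by auto
  have S2i: "x \<in> {a<..<b} \<and> x \<noteq> \<alpha>0" if "x \<in> S2" for x using that a0 unfolding S2_def by auto
  have bS1: "betw S1" unfolding betw_def S1_def by auto
  have bS2: "betw S2" unfolding betw_def S2_def by auto
  have P1: "betw {x\<in>S1. M x \<ge> 0} \<and> noalt (deriv g) {x\<in>S1. M x \<ge> 0} \<and>
         betw {x\<in>S1. M x \<le> 0} \<and> noalt (deriv g) {x\<in>S1. M x \<le> 0}"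
    by (rule side_pieces[OF bS1, where H'=H' and M'=M' and \<epsilon>=\<epsilon> and C=K])
       (use Hd Hs Md Mp fK S1i eps in \<open>blast+\<close>)
  have P2: "betw {x\<in>S2. M x \<ge> 0} \<and> noalt (deriv g) {x\<in>S2. M x \<ge> 0} \<and>
         betw {x\<in>S2. M x \<le> 0} \<and> noalt (deriv g) {x\<in>S2. M x \<le> 0}"
    by (rule side_pieces[OF bS2, where H'=H' and M'=M' and \<epsilon>=\<epsilon> and C=K])
       (use Hd Hs Md Mp fK S2i eps in \<open>blast+\<close>)
  define P where "P p = (if p = 0 then {a} else if p = 1 then {b}
      else if p = 2 then {x\<in>S1. M x \<ge> 0} else if p = 3 then {x\<in>S1. M x \<le> 0}
      else if p = 4 then {x\<in>S2. M x \<ge> 0} else {x\<in>S2. M x \<le> 0})" for p :: nat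
  have sing: "betw {c} \<and> noalt f {c}" for c :: real and f
    unfolding betw_def noalt_def by auto
  have cov: "{\<alpha>\<in>{a..b}. hh \<alpha> \<noteq> 0} \<subseteq> (\<Union>p\<in>{0..<6}. P p)"
  proof
    fix x assume x: "x \<in> {\<alpha>\<in>{a..b}. hh \<alpha> \<noteq> 0}"
    then have "x \<noteq> \<alpha>0" using hh0 by auto
    then have "x = a \<or> x = b \<or> x \<in> S1 \<or> x \<in> S2" using x unfolding S1_def S2_def by auto
    then have "x \<in> P 0 \<or> x \<in> P 1 \<or> x \<in> P 2 \<or> x \<in> P 3 \<or> x \<in> P 4 \<or> x \<in> P 5"
      unfolding P_def by auto
    moreover have "{0,1,2,3,4,5} \<subseteq> {0..<6::nat}" by auto
    ultimately show "x \<in> (\<Union>p\<in>{0..<6}. P p)" by blast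
  qed
  have pc: "betw (P p) \<and> noalt (deriv g) (P p)" if "p \<in> {0..<6}" for p
  proof -
    have "p = 0 \<or> p = 1 \<or> p = 2 \<or> p = 3 \<or> p = 4 \<or> p = 5" using that by auto
    then show ?thesis unfolding P_def using sing P1 P2 by auto
  qed
  have "sign_changes_at_most (2 * card {0..<6::nat}) (deriv g) {\<alpha>\<in>{a..b}. hh \<alpha> \<noteq> 0}"
    by (rule comb[OF _ cov]) (use pc in auto)
  then show ?thesis unfolding g_def by simp
qed



theorem mainTheorem11:
  fixes \<kappa> :: real and x0 :: "real^2"
  assumes "\<kappa> > 0" and "\<kappa> * norm x0 \<notin> \<rat>"
  shows "\<exists>N::nat. \<forall>(m::int) (l::int) (a::real) (b::real) (\<alpha>0::real).
    (m \<noteq> 0 \<and> -pi \<le> a \<and> a \<le> b \<and> b \<le> pi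
     \<and> (\<forall>\<alpha>\<in>{a<..<b}. deriv (deriv (Phi m x0)) \<alpha> \<noteq> 0)
     \<and> \<alpha>0 \<in> {a..b} \<and> \<kappa> * deriv (Phi m x0) \<alpha>0 = of_int l
     \<and> deriv (deriv (Phi m x0)) \<alpha>0 \<noteq> 0
     \<and> (\<forall>\<alpha>\<in>{a..b}. \<bar>\<kappa> * deriv (Phi m x0) \<alpha> - of_int l\<bar> \<le> 1/2))
    \<longrightarrow> sign_changes_at_most N
          (deriv (\<lambda>\<alpha>. sqrt \<bar>Phi_l \<kappa> m x0 l \<alpha> - Phi_l \<kappa> m x0 l \<alpha>0\<bar>
                        / sin (pi * \<kappa> * deriv (Phi_l \<kappa> m x0 l) \<alpha>)))
          {\<alpha> \<in> {a..b}. deriv (Phi_l \<kappa> m x0 l) \<alpha> \<noteq> 0}"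
proof (intro exI[of _ 12] allI impI)
  fix m l :: int and a b \<alpha>0 :: real
  assume h: "m \<noteq> 0 \<and> -pi \<le> a \<and> a \<le> b \<and> b \<le> pi
     \<and> (\<forall>\<alpha>\<in>{a<..<b}. deriv (deriv (Phi m x0)) \<alpha> \<noteq> 0)
     \<and> \<alpha>0 \<in> {a..b} \<and> \<kappa> * deriv (Phi m x0) \<alpha>0 = of_int l
     \<and> deriv (deriv (Phi m x0)) \<alpha>0 \<noteq> 0
     \<and> (\<forall>\<alpha>\<in>{a..b}. \<bar>\<kappa> * deriv (Phi m x0) \<alpha> - of_int l\<bar> \<le> 1/2)"
  have kp: "\<kappa> > 0" using assms(1) .
  define hh where "hh \<alpha> = \<kappa> * (- of_int m * pq x0 \<alpha>) - of_int l" for \<alpha>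
  define hp where "hp \<alpha> = \<kappa> * of_int m * pp x0 \<alpha>" for \<alpha>
  define u where "u \<alpha> = Phi_l \<kappa> m x0 l \<alpha> - Phi_l \<kappa> m x0 l \<alpha>0" for \<alpha>
  have dPl: "deriv (Phi_l \<kappa> m x0 l) \<alpha> = hh \<alpha> / \<kappa>" for \<alpha>
    unfolding dPhi_l hh_def using kp by (simp add: field_simps)
  have geq: "(\<lambda>\<alpha>. sqrt \<bar>Phi_l \<kappa> m x0 l \<alpha> - Phi_l \<kappa> m x0 l \<alpha>0\<bar>
                        / sin (pi * \<kappa> * deriv (Phi_l \<kappa> m x0 l) \<alpha>))
      = (\<lambda>\<alpha>. sqrt \<bar>u \<alpha>\<bar> / sin (pi * hh \<alpha>))"
    unfolding dPl u_def using kp by (intro ext) simp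
  have Deq: "{\<alpha> \<in> {a..b}. deriv (Phi_l \<kappa> m x0 l) \<alpha> \<noteq> 0} = {\<alpha>\<in>{a..b}. hh \<alpha> \<noteq> 0}"
    unfolding dPl using kp by auto
  have main: "sign_changes_at_most 12 (deriv (\<lambda>\<alpha>. sqrt \<bar>u \<alpha>\<bar> / sin (pi * hh \<alpha>)))
        {\<alpha>\<in>{a..b}. hh \<alpha> \<noteq> 0}"
  proof (cases "a = b")
    case True
    have cov: "{\<alpha>\<in>{a..b}. hh \<alpha> \<noteq> 0} \<subseteq> (\<Union>p\<in>{0..<6::nat}. (\<lambda>p. {a}) p)"
      using True by auto
    have "sign_changes_at_most (2 * card {0..<6::nat}) (deriv (\<lambda>\<alpha>. sqrt \<bar>u \<alpha>\<bar> / sin (pi * hh \<alpha>)))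
        {\<alpha>\<in>{a..b}. hh \<alpha> \<noteq> 0}"
      by (rule comb[OF _ cov]) (auto simp: betw_def noalt_def)
    then show ?thesis by simp
  next
    case False
    then have ab: "a < b" using h by auto
    show ?thesis
    proof (rule core[OF kp ab])
      show "\<alpha>0 \<in> {a..b}" using h by blast
      show "(hh has_real_derivative hp x) (at x)" for x
        unfolding hh_def[abs_def] hp_def
        by (auto intro!: derivative_eq_intros pq_der)
      show "(hp has_real_derivative -(hh x + of_int l)) (at x)" for x
        unfolding hh_def hp_def[abs_def]
        by (auto intro!: derivative_eq_intros pp_der)
      show "(u has_real_derivative hh x / \<kappa>) (at x)" for x
      proof -
        have "(u has_real_derivative - of_int m * pq x0 x - of_int l / \<kappa> - 0) (at x)"
          unfolding u_def[abs_def] by (intro derivative_intros Phi_l_der)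
        moreover have "- of_int m * pq x0 x - of_int l / \<kappa> - 0 = hh x / \<kappa>"
          unfolding hh_def using kp by (simp add: field_simps)
        ultimately show ?thesis by simp
      qed
      show "u \<alpha>0 = 0" unfolding u_def by simp
      show "hp x \<noteq> 0" if "x \<in> {a<..<b}" for x
        using h that kp unfolding hp_def ddPhi by auto
      show "hh \<alpha>0 = 0" using h unfolding hh_def dPhi by simp
      show "\<bar>hh x\<bar> \<le> 1/2" if "x \<in> {a..b}" for x
        using h that unfolding hh_def dPhi by auto
    qed
  qed
  show "sign_changes_at_most 12
          (deriv (\<lambda>\<alpha>. sqrt \<bar>Phi_l \<kappa> m x0 l \<alpha> - Phi_l \<kappa> m x0 l \<alpha>0\<bar>
                        / sin (pi * \<kappa> * deriv (Phi_l \<kappa> m x0 l) \<alpha>)))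
          {\<alpha> \<in> {a..b}. deriv (Phi_l \<kappa> m x0 l) \<alpha> \<noteq> 0}"
    unfolding geq Deq by (rule main)
qed


end
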